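(* If there exists a $(4,1,p)$-QRA coding with $p>1/2$, then there exist vectors $\vec s_1,\dots,\vec s_4\in\mathbb{R}^3$ and reals $c_1,\dots,c_4$ such that for every $w=w_1w_2w_3w_4\in\{0,1\}^4$ the set $$D_w=\{\vec r\in B : \vec r\cdot\vec s_i>c_i \text{ for all } i \text{ with } w_i=0,\ \vec r\cdot \vec s_i<c_i \text{ for all } i\text{ with } w_i=1\}$$ is nonempty, where $B=\{\vec r\in\mathbb{R}^3: |\vec r|\le 1\}$ is the closed unit ball. In other words, the three-dimensional ball is divided into $16$ distinct nonempty regions by the $4$ planes $\{\vec r:\vec r\cdot\vec s_i=c_i\}$.
   Context: An $(n,m,p)$-quantum random access (QRA) coding is a map assigning to each $n$-bit string $x\in\{0,1\}^n$ an $m$-qubit state $\rho_x$ (a positive semidefinite trace-one operator on $\mathbb{C}^{2^m}$) such that for every $i\in\{1,\dots,n\}$ there is a POVM $E^i=\{E^i_0,E^i_1\}$ (i.e. $E^i_0,E^i_1$ are positive semidefinite Hermitian operators on $\mathbb{C}^{2^m}$ with $E^i_0+E^i_1=I$) satisfying $\mathrm{Tr}(E^i_{x_i}\rho_x)\ge p$ for all $x\in\{0,1\}^n$, where $x_i$ is the $i$-th bit of $x$. Every one-qubit state $\rho$ can be written uniquely as $\rho=\frac12(I+r_xX+r_yY+r_zZ)$ with $X,Y,Z$ the Pauli matrices and $\vec r=(r_x,r_y,r_z)\in\mathbb{R}^3$, $|\vec r|\le 1$ (the Bloch vector); the set of Bloch vectors is the closed unit ball $B$. *)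

theory Defs
  imports "HOL-Analysis.Analysis"
begin

text \<open>Operators on C^d are represented as functions nat => nat => complex,
  only the entries with indices below d being relevant.\<close>

type_synonym cmat = "nat \<Rightarrow> nat \<Rightarrow> complex"

definition hermitian :: "nat \<Rightarrow> cmat \<Rightarrow> bool" where
  "hermitian d A \<longleftrightarrow> (\<forall>i<d. \<forall>j<d. A i j = cnj (A j i))"

definition psd :: "nat \<Rightarrow> cmat \<Rightarrow> bool" where
  "psd d A \<longleftrightarrow> hermitian d A \<and>
     (\<forall>v :: nat \<Rightarrow> complex. 0 \<le> Re (\<Sum>i<d. \<Sum>j<d. cnj (v i) * A i j * v j))"

definition mtrace :: "nat \<Rightarrow> cmat \<Rightarrow> complex" where
  "mtrace d A = (\<Sum>i<d. A i i)"

definition mmult :: "nat \<Rightarrow> cmat \<Rightarrow> cmat \<Rightarrow> cmat" where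
  "mmult d A B = (\<lambda>i k. \<Sum>j<d. A i j * B j k)"

definition density :: "nat \<Rightarrow> cmat \<Rightarrow> bool" where
  "density d \<rho> \<longleftrightarrow> psd d \<rho> \<and> mtrace d \<rho> = 1"

text \<open>A two-outcome POVM {E False, E True} (False = outcome 0, True = outcome 1).\<close>
definition povm2 :: "nat \<Rightarrow> (bool \<Rightarrow> cmat) \<Rightarrow> bool" where
  "povm2 d E \<longleftrightarrow> psd d (E False) \<and> psd d (E True) \<and>
     (\<forall>i<d. \<forall>j<d. E False i j + E True i j = (if i = j then 1 else 0))"

text \<open>(n,m,p)-QRA coding. n-bit strings are bool lists of length n
  (True = bit 1), bit i (1-based in the paper) is x ! (i-1).\<close>
definition QRA :: "nat \<Rightarrow> nat \<Rightarrow> real \<Rightarrow> bool" where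
  "QRA n m p \<longleftrightarrow> (\<exists>(\<rho> :: bool list \<Rightarrow> cmat) (E :: nat \<Rightarrow> bool \<Rightarrow> cmat).
     (\<forall>x. length x = n \<longrightarrow> density (2^m) (\<rho> x)) \<and>
     (\<forall>i<n. povm2 (2^m) (E i)) \<and>
     (\<forall>x. length x = n \<longrightarrow> (\<forall>i<n. Re (mtrace (2^m) (mmult (2^m) (E i (x ! i)) (\<rho> x))) \<ge> p)))"

end

theory Submission
  imports Defs
begin

definition v3 :: "real \<Rightarrow> real \<Rightarrow> real \<Rightarrow> real^3" where
  "v3 a b c = vector [a, b, c]"

lemma v3_inner: "v3 a b c \<bullet> v3 d e f = a*d + b*e + c*f"
  unfolding v3_def inner_vec_def by (simp add: sum_3)

definition bloch :: "cmat \<Rightarrow> real^3" where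
  "bloch \<rho> = v3 (2 * Re (\<rho> 0 1)) (- 2 * Im (\<rho> 0 1)) (Re (\<rho> 0 0) - Re (\<rho> 1 1))"

definition svec :: "cmat \<Rightarrow> real^3" where
  "svec E = v3 (Re (E 0 1)) (- Im (E 0 1)) ((Re (E 0 0) - Re (E 1 1)) / 2)"

definition aval :: "cmat \<Rightarrow> real" where
  "aval E = (Re (E 0 0) + Re (E 1 1)) / 2"

lemma sum2: "(\<Sum>i<(2::nat). f i) = f 0 + f 1"
  by (simp add: numeral_2_eq_2)

lemma herm2:
  assumes "hermitian 2 A"
  shows "A 1 0 = cnj (A 0 1)" "Im (A 0 0) = 0" "Im (A 1 1) = 0"
proof -
  have h: "\<And>i j. i < 2 \<Longrightarrow> j < 2 \<Longrightarrow> A i j = cnj (A j i)"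
    using assms unfolding hermitian_def by blast
  show "A 1 0 = cnj (A 0 1)" using h[of 1 0] by simp
  have "Im (A 0 0) = Im (cnj (A 0 0))" using h[of 0 0] by simp
  then show "Im (A 0 0) = 0" by simp
  have "Im (A 1 1) = Im (cnj (A 1 1))" using h[of 1 1] by simp
  then show "Im (A 1 1) = 0" by simp
qed

lemma trace_formula:
  assumes "hermitian 2 E" "density 2 \<rho>"
  shows "Re (mtrace 2 (mmult 2 E \<rho>)) = aval E + bloch \<rho> \<bullet> svec E"
proof -
  have hr: "hermitian 2 \<rho>" using assms(2) unfolding density_def psd_def by blast
  have tr: "\<rho> 0 0 + \<rho> 1 1 = 1" using assms(2) unfolding density_def mtrace_def by (simp add: sum2)
  then have tr': "Re (\<rho> 0 0) + Re (\<rho> 1 1) = 1" by (metis one_complex.sel(1) plus_complex.sel(1))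
  note e = herm2[OF assms(1)] and r = herm2[OF hr]
  have m: "mtrace 2 (mmult 2 E \<rho>) = E 0 0 * \<rho> 0 0 + E 0 1 * \<rho> 1 0 + (E 1 0 * \<rho> 0 1 + E 1 1 * \<rho> 1 1)"
    unfolding mtrace_def mmult_def sum2 by simp
  have "Re (mtrace 2 (mmult 2 E \<rho>)) = Re (E 0 0) * Re (\<rho> 0 0) + Re (E 1 1) * Re (\<rho> 1 1)
     + 2 * (Re (E 0 1) * Re (\<rho> 0 1) + Im (E 0 1) * Im (\<rho> 0 1))"
    unfolding m using e r by simp
  also have "\<dots> = aval E + bloch \<rho> \<bullet> svec E"
  proof -
    have q: "Re (\<rho> 1 1) = 1 - Re (\<rho> 0 0)" using tr' by simp
    show ?thesis unfolding aval_def bloch_def svec_def v3_inner q by (simp add: field_simps)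
  qed
  finally show ?thesis .
qed

lemma Qlem:
  fixes \<rho> :: cmat and \<alpha> \<beta> :: real
  assumes r1: "\<rho> 1 0 = cnj (\<rho> 0 1)" and r2: "Im (\<rho> 0 0) = 0" and r3: "Im (\<rho> 1 1) = 0"
  shows "Re (\<Sum>i<2. \<Sum>j<2. cnj ((\<lambda>k. if k = 0 then complex_of_real \<alpha> else - of_real \<beta> * cnj (\<rho> 0 1)) i) * \<rho> i j * (\<lambda>k. if k = 0 then complex_of_real \<alpha> else - of_real \<beta> * cnj (\<rho> 0 1)) j)
    = Re (\<rho> 0 0) * \<alpha>^2 - 2 * \<alpha> * \<beta> * ((Re (\<rho> 0 1))^2 + (Im (\<rho> 0 1))^2) + Re (\<rho> 1 1) * ((Re (\<rho> 0 1))^2 + (Im (\<rho> 0 1))^2) * \<beta>^2"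
proof -
  define z where "z = \<rho> 0 1"
  have a: "\<rho> 0 0 = of_real (Re (\<rho> 0 0))" using r2 by (simp add: complex_eq_iff)
  have b: "\<rho> 1 1 = of_real (Re (\<rho> 1 1))" using r3 by (simp add: complex_eq_iff)
  have zz: "z * cnj z = of_real (((Re z)^2 + (Im z)^2))" by (rule complex_mult_cnj)
  have "(\<Sum>i<2. \<Sum>j<2. cnj ((\<lambda>k. if k = 0 then complex_of_real \<alpha> else - of_real \<beta> * cnj (\<rho> 0 1)) i) * \<rho> i j * (\<lambda>k. if k = 0 then complex_of_real \<alpha> else - of_real \<beta> * cnj (\<rho> 0 1)) j)
     = of_real \<alpha> * of_real \<alpha> * \<rho> 0 0 - 2 * of_real \<alpha> * of_real \<beta> * (z * cnj z) + of_real \<beta> * of_real \<beta> * (z * cnj z) * \<rho> 1 1"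
    unfolding sum2 z_def[symmetric] using r1 z_def by (simp add: algebra_simps)
  also have "\<dots> = of_real (Re (\<rho> 0 0) * \<alpha>^2 - 2 * \<alpha> * \<beta> * ((Re z)^2 + (Im z)^2) + Re (\<rho> 1 1) * ((Re z)^2 + (Im z)^2) * \<beta>^2)"
    apply (simp only: zz, subst a, subst b) by (simp add: power2_eq_square algebra_simps)
  finally show ?thesis unfolding z_def by (metis Re_complex_of_real)
qed

lemma bloch_norm:
  assumes "density 2 \<rho>"
  shows "norm (bloch \<rho>) \<le> 1"
proof -
  have hr: "hermitian 2 \<rho>" using assms unfolding density_def psd_def by blast
  have q: "\<And>v. 0 \<le> Re (\<Sum>i<2. \<Sum>j<2. cnj (v i) * \<rho> i j * v j)"
    using assms unfolding density_def psd_def by blast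
  have tr: "\<rho> 0 0 + \<rho> 1 1 = 1" using assms unfolding density_def mtrace_def by (simp add: sum2)
  then have tr': "Re (\<rho> 0 0) + Re (\<rho> 1 1) = 1" by (metis one_complex.sel(1) plus_complex.sel(1))
  note r = herm2[OF hr]
  define x where "x = Re (\<rho> 0 1)"
  define y where "y = Im (\<rho> 0 1)"
  define a where "a = Re (\<rho> 0 0)"
  define b where "b = Re (\<rho> 1 1)"
  define m where "m = x^2 + y^2"
  have Q: "0 \<le> a * \<alpha>^2 - 2 * \<alpha> * \<beta> * m + b * m * \<beta>^2" for \<alpha> \<beta> :: real
  proof -
    have "0 \<le> Re (\<Sum>i<2. \<Sum>j<2. cnj ((\<lambda>k. if k = 0 then complex_of_real \<alpha> else - of_real \<beta> * cnj (\<rho> 0 1)) i) * \<rho> i j * (\<lambda>k. if k = 0 then complex_of_real \<alpha> else - of_real \<beta> * cnj (\<rho> 0 1)) j)"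
      by (rule q)
    also have "\<dots> = a * \<alpha>^2 - 2 * \<alpha> * \<beta> * m + b * m * \<beta>^2"
      unfolding Qlem[OF r] a_def b_def m_def x_def y_def by simp
    finally show ?thesis .
  qed
  have a0: "0 \<le> a" using Q[of 1 0] by simp
  have "0 \<le> Re (\<Sum>i<2. \<Sum>j<2. cnj ((\<lambda>k. if k = 0 then 0 else 1::complex) i) * \<rho> i j * (\<lambda>k. if k = 0 then 0 else 1::complex) j)"
    by (rule q)
  then have b0: "0 \<le> b" unfolding sum2 b_def by simp
  have m0: "0 \<le> m" unfolding m_def by simp
  have det: "m \<le> a * b"
  proof (cases "m = 0")
    case True then show ?thesis using a0 b0 by simp
  next
    case False
    then have mp: "m > 0" using m0 by simp
    show ?thesis
    proof (cases "b = 0")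
      case True
      have "0 \<le> a - 2 * ((a+1)/(2*m)) * m" using Q[of 1 "(a+1)/(2*m)"] True by simp
      also have "\<dots> = -1" using mp by (simp add: field_simps)
      finally show ?thesis by simp
    next
      case False
      then have bp: "b > 0" using b0 by simp
      have "0 \<le> a * b^2 - 2 * b * m + b * m" using Q[of b 1] by simp
      then have "0 \<le> b * (a * b - m)" by (simp add: algebra_simps power2_eq_square)
      then show ?thesis using bp by (simp add: zero_le_mult_iff)
    qed
  qed
  have "bloch \<rho> \<bullet> bloch \<rho> = 4 * m + (a - b)^2"
    unfolding bloch_def v3_inner m_def x_def y_def a_def b_def by (simp add: power2_eq_square algebra_simps)
  also have "\<dots> \<le> (a + b)^2" using det by (simp add: power2_eq_square algebra_simps)
  also have "\<dots> = 1" using tr' a_def b_def by simp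
  finally have le1: "bloch \<rho> \<bullet> bloch \<rho> \<le> 1" .
  have "norm (bloch \<rho>) = sqrt (bloch \<rho> \<bullet> bloch \<rho>)" by (rule norm_eq_sqrt_inner)
  then show ?thesis using le1 by simp
qed

lemma povm_trace:
  assumes "povm2 2 E" "density 2 \<rho>"
  shows "Re (mtrace 2 (mmult 2 (E True) \<rho>)) = 1 - Re (mtrace 2 (mmult 2 (E False) \<rho>))"
proof -
  have h: "\<forall>i<2. \<forall>j<2. E False i j + E True i j = (if i = j then 1 else 0)"
    using assms(1) unfolding povm2_def by blast
  have h00: "E False 0 0 + E True 0 0 = 1" using h by simp
  have h01: "E False 0 1 + E True 0 1 = 0" using h by simp
  have h10: "E False 1 0 + E True 1 0 = 0" using h by simp
  have h11: "E False 1 1 + E True 1 1 = 1" using h by simp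
  have s00: "E True 0 0 = 1 - E False 0 0" using h00 by (metis add_diff_cancel_left')
  have s01: "E True 0 1 = - E False 0 1" using h01 by (metis add.commute add_eq_0_iff)
  have s10: "E True 1 0 = - E False 1 0" using h10 by (metis add.commute add_eq_0_iff)
  have s11: "E True 1 1 = 1 - E False 1 1" using h11 by (metis add_diff_cancel_left')
  have tr: "\<rho> 0 0 + \<rho> 1 1 = 1" using assms(2) unfolding density_def mtrace_def by (simp add: sum2)
  have m: "\<And>F. mtrace 2 (mmult 2 F \<rho>) = F 0 0 * \<rho> 0 0 + F 0 1 * \<rho> 1 0 + (F 1 0 * \<rho> 0 1 + F 1 1 * \<rho> 1 1)"
    unfolding mtrace_def mmult_def sum2 by simp
  have "mtrace 2 (mmult 2 (E True) \<rho>) = (\<rho> 0 0 + \<rho> 1 1) - mtrace 2 (mmult 2 (E False) \<rho>)"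
    unfolding m s00 s01 s10 s11 by (simp add: algebra_simps)
  then have "mtrace 2 (mmult 2 (E True) \<rho>) = 1 - mtrace 2 (mmult 2 (E False) \<rho>)"
    unfolding tr .
  then show ?thesis by simp
qed

theorem lemma1:
  fixes p :: real
  assumes "QRA 4 1 p" and "p > 1/2"
  shows "\<exists>(s :: nat \<Rightarrow> real^3) (c :: nat \<Rightarrow> real).
           \<forall>w :: bool list. length w = 4 \<longrightarrow>
             (\<exists>r :: real^3. norm r \<le> 1 \<and>
                (\<forall>i<4. (\<not> w ! i \<longrightarrow> r \<bullet> s i > c i) \<and> (w ! i \<longrightarrow> r \<bullet> s i < c i)))"
proof -
  obtain \<rho> :: "bool list \<Rightarrow> cmat" and E :: "nat \<Rightarrow> bool \<Rightarrow> cmat" where H: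
    "(\<forall>x. length x = 4 \<longrightarrow> density (2^1) (\<rho> x)) \<and>
     (\<forall>i<4. povm2 (2^1) (E i)) \<and>
     (\<forall>x. length x = 4 \<longrightarrow> (\<forall>i<4. Re (mtrace (2^1) (mmult (2^1) (E i (x ! i)) (\<rho> x))) \<ge> p))"
    using assms(1) unfolding QRA_def by blast
  have d: "\<And>x. length x = 4 \<Longrightarrow> density 2 (\<rho> x)"
    and pv: "\<And>i. i < 4 \<Longrightarrow> povm2 2 (E i)"
    and pr: "\<And>x i. length x = 4 \<Longrightarrow> i < 4 \<Longrightarrow> Re (mtrace 2 (mmult 2 (E i (x ! i)) (\<rho> x))) \<ge> p"
    using H by auto
  have main: "\<exists>r :: real^3. norm r \<le> 1 \<and>
                (\<forall>i<4. (\<not> w ! i \<longrightarrow> r \<bullet> svec (E i False) > 1/2 - aval (E i False))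
                   \<and> (w ! i \<longrightarrow> r \<bullet> svec (E i False) < 1/2 - aval (E i False)))"
    if lw: "length w = 4" for w :: "bool list"
  proof (rule exI[of _ "bloch (\<rho> w)"], intro conjI allI impI)
      show "norm (bloch (\<rho> w)) \<le> 1" using bloch_norm[OF d[OF lw]] .
    next
      fix i :: nat assume i: "i < 4"
      have he: "hermitian 2 (E i False)" using pv[OF i] unfolding povm2_def psd_def by blast
      have tf: "Re (mtrace 2 (mmult 2 (E i False) (\<rho> w))) = aval (E i False) + bloch (\<rho> w) \<bullet> svec (E i False)"
        by (rule trace_formula[OF he d[OF lw]])
      have tt: "Re (mtrace 2 (mmult 2 (E i True) (\<rho> w))) = 1 - Re (mtrace 2 (mmult 2 (E i False) (\<rho> w)))"
        by (rule povm_trace[OF pv[OF i] d[OF lw]])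
      have pi: "Re (mtrace 2 (mmult 2 (E i (w ! i)) (\<rho> w))) \<ge> p" using pr[OF lw i] .
      {
        assume "\<not> w ! i"
        then show "bloch (\<rho> w) \<bullet> svec (E i False) > 1/2 - aval (E i False)"
          using pi tf assms(2) by simp
      next
        assume "w ! i"
        then show "bloch (\<rho> w) \<bullet> svec (E i False) < 1/2 - aval (E i False)"
          using pi tf tt assms(2) by simp
      }
  qed
  show ?thesis
    apply (rule exI[of _ "\<lambda>i. svec (E i False)"], rule exI[of _ "\<lambda>i. 1/2 - aval (E i False)"])
    using main by simp
qed

end
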